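(* Let $\mathcal{S}$ be an instance space, $\mathcal{W}$ a hypothesis space, and $\ell:\mathcal{S}\times\mathcal{W}\to\mathbb{R}^+$ a nonnegative loss function. Let $\mathbf{S}=(S_1,\ldots,S_n)$ have law $\pi^{\otimes n}$ for an (unknown) distribution $\pi$ on $\mathcal{S}$, and let $W\in\mathcal{W}$ be produced by a learning algorithm $\mathcal{A}$ given by a conditional distribution $P_{W|\mathbf{S}}$; let $P_W$ denote the marginal law of $W$. Let $(\bar S,\bar W)\sim \pi\otimes P_W$ (independent) and let $\Lambda(\lambda)=\log\mathbb{E}\big[e^{\lambda(\ell(\bar S,\bar W)-\mathbb{E}[\ell(\bar S,\bar W)])}\big]$ be the cumulant generating function of $\ell(\bar S,\bar W)$. Suppose that for some $b_+\in(0,\infty]$ there is a convex $\psi_+:[0,b_+)\to\mathbb{R}$ with $\psi_+(0)=\psi_+'(0)=0$ and $\Lambda(\lambda)\le\psi_+(\lambda)$ for all $\lambda\in[0,b_+)$, and that for some $b_-\in(0,\infty]$ there is a convex $\psi_-:[0,b_-)\to\mathbb{R}$ with $\psi_-(0)=\psi_-'(0)=0$ and $\Lambda(\lambda)\le\psi_-(-\lambda)$ for all $\lambda\in(-b_-,0]$. Then \[ -\frac{1}{n}\sum_{i=1}^n \psi_+^{\ast-1}\big(I(S_i;W)\big)\;\le\;{\rm gen}(\pi,\mathcal{A})\;\le\;\frac{1}{n}\sum_{i=1}^n \psi_-^{\ast-1}\big(I(S_i;W)\big). \]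
   Context: For a hypothesis $w$, the true risk is $L_\pi(w)=\mathbb{E}_{S\sim\pi}[\ell(S,w)]$ and the empirical risk is $L_{\mathbf{S}}(w)=\frac1n\sum_{i=1}^n\ell(S_i,w)$. The expected generalization error is ${\rm gen}(\pi,\mathcal{A})=\mathbb{E}[L_\pi(W)-L_{\mathbf{S}}(W)]$, with the expectation over $(\mathbf{S},W)\sim\pi^{\otimes n}P_{W|\mathbf{S}}$. $I(\cdot;\cdot)$ denotes mutual information. For a convex $\psi:[0,b)\to\mathbb{R}$, $\psi^\ast(x)=\sup_{\lambda\in[0,b)}(\lambda x-\psi(\lambda))$ is its Legendre dual and $\psi^{\ast-1}$ denotes the inverse of $\psi^\ast$ (on $[0,\infty)$). *)

theory Defs
  imports "HOL-Probability.Probability"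
begin

definition sample_space :: "nat \<Rightarrow> 's measure \<Rightarrow> (nat \<Rightarrow> 's) measure" where
  "sample_space n \<pi> = PiM {..<n} (\<lambda>_. \<pi>)"

text \<open>Joint law of (S, W) = pi^n P_{W|S}; K is the kernel P_{W|S}.\<close>
definition joint_law ::
  "nat \<Rightarrow> 's measure \<Rightarrow> 'w measure \<Rightarrow> ((nat \<Rightarrow> 's) \<Rightarrow> 'w measure) \<Rightarrow> ((nat \<Rightarrow> 's) \<times> 'w) measure" where
  "joint_law n \<pi> MW K =
     sample_space n \<pi> \<bind> (\<lambda>s. distr (K s) (sample_space n \<pi> \<Otimes>\<^sub>M MW) (\<lambda>w. (s, w)))"

definition output_law ::
  "nat \<Rightarrow> 's measure \<Rightarrow> 'w measure \<Rightarrow> ((nat \<Rightarrow> 's) \<Rightarrow> 'w measure) \<Rightarrow> 'w measure" where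
  "output_law n \<pi> MW K = distr (joint_law n \<pi> MW K) MW snd"

definition true_risk :: "'s measure \<Rightarrow> ('s \<Rightarrow> 'w \<Rightarrow> real) \<Rightarrow> 'w \<Rightarrow> real" where
  "true_risk \<pi> loss w = (\<integral>z. loss z w \<partial>\<pi>)"

definition emp_risk :: "nat \<Rightarrow> ('s \<Rightarrow> 'w \<Rightarrow> real) \<Rightarrow> (nat \<Rightarrow> 's) \<Rightarrow> 'w \<Rightarrow> real" where
  "emp_risk n loss s w = (1 / real n) * (\<Sum>i<n. loss (s i) w)"

definition gen_err ::
  "nat \<Rightarrow> 's measure \<Rightarrow> 'w measure \<Rightarrow> ((nat \<Rightarrow> 's) \<Rightarrow> 'w measure) \<Rightarrow> ('s \<Rightarrow> 'w \<Rightarrow> real) \<Rightarrow> real" where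
  "gen_err n \<pi> MW K loss =
     (\<integral>z. true_risk \<pi> loss (snd z) - emp_risk n loss (fst z) (snd z) \<partial>joint_law n \<pi> MW K)"

definition mi_SiW ::
  "nat \<Rightarrow> 's measure \<Rightarrow> 'w measure \<Rightarrow> ((nat \<Rightarrow> 's) \<Rightarrow> 'w measure) \<Rightarrow> nat \<Rightarrow> real" where
  "mi_SiW n \<pi> MW K i =
     prob_space.mutual_information (joint_law n \<pi> MW K) (exp 1) \<pi> MW (\<lambda>z. fst z i) snd"

definition dom0 :: "ereal \<Rightarrow> real set" where
  "dom0 b = {x. 0 \<le> x \<and> ereal x < b}"

definition legendre_dual :: "(real \<Rightarrow> real) \<Rightarrow> ereal \<Rightarrow> real \<Rightarrow> ereal" where
  "legendre_dual \<psi> b x = (SUP t\<in>dom0 b. ereal (t * x - \<psi> t))"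

text \<open>Inverse of psi^* on [0,infinity) (generalized inverse; coincides with the inverse
  where psi^* is a bijection).\<close>
definition legendre_dual_inv :: "(real \<Rightarrow> real) \<Rightarrow> ereal \<Rightarrow> real \<Rightarrow> real" where
  "legendre_dual_inv \<psi> b y = Inf {x. 0 \<le> x \<and> ereal y < legendre_dual \<psi> b x}"

end

theory Submission
  imports Defs
begin

lemma young_pt:
  fixes p a :: real assumes "0 \<le> p"
  shows "p * a \<le> p * ln p - p + exp a"
proof (cases "p = 0")
  case True then show ?thesis by simp
next
  case False
  then have pp: "0 < p" using assms by simp
  have "1 + (a - ln p) \<le> exp (a - ln p)" by (rule exp_ge_add_one_self)
  then have "p * (1 + (a - ln p)) \<le> p * exp (a - ln p)" using pp by (simp add: mult_left_mono)
  also have "p * exp (a - ln p) = exp a" using pp by (simp add: exp_diff)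
  finally show ?thesis by (simp add: algebra_simps)
qed

lemma dv:
  assumes Q: "prob_space Q" and N: "prob_space N" and sN: "sets N = sets Q"
  and ac: "absolutely_continuous Q N"
  and ent: "integrable N (entropy_density (exp 1) Q N)"
  and f[measurable]: "f \<in> borel_measurable Q" and fN: "integrable N f"
  and ef: "integrable Q (\<lambda>x. exp (f x))"
  shows "integral\<^sup>L N f \<le> KL_divergence (exp 1) Q N + ln (\<integral>x. exp (f x) \<partial>Q)"
proof -
  interpret Q: prob_space Q by fact
  interpret N: prob_space N by fact
  define p where "p x = enn2real (RN_deriv Q N x)" for x
  have pm[measurable]: "p \<in> borel_measurable Q" unfolding p_def by measurable
  have p0: "0 \<le> p x" for x unfolding p_def by simp
  have "N = density Q (RN_deriv Q N)" using Q.density_RN_deriv[OF ac sN] by simp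
  also have "\<dots> = density Q (\<lambda>x. ennreal (p x))"
  proof (rule density_cong)
    show "AE x in Q. RN_deriv Q N x = ennreal (p x)"
      using Q.RN_deriv_finite[OF prob_space_imp_sigma_finite[OF N] ac sN]
      by eventually_elim (simp add: p_def less_top)
  qed auto
  finally have Neq: "N = density Q (\<lambda>x. ennreal (p x))" .
  have intN: "integrable N h \<longleftrightarrow> integrable Q (\<lambda>x. p x * h x)" if [measurable]: "h \<in> borel_measurable Q" for h :: "_ \<Rightarrow> real"
    unfolding Neq by (subst integrable_density) (auto simp: p0)
  have intgN: "integral\<^sup>L N h = (\<integral>x. p x * h x \<partial>Q)" if [measurable]: "h \<in> borel_measurable Q" for h :: "_ \<Rightarrow> real"
    unfolding Neq by (subst integral_density) (auto simp: p0)
  have entd: "entropy_density (exp 1) Q N x = ln (p x)" for x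
    by (simp add: entropy_density_def p_def log_def)
  have lnpm[measurable]: "(\<lambda>x. ln (p x)) \<in> borel_measurable Q" by measurable
  have i1: "integrable Q (\<lambda>x. p x * f x)" using fN intN[OF f] by simp
  have i2: "integrable Q (\<lambda>x. p x * 1)" using intN[of "\<lambda>_. 1"] N.integrable_const by simp
  have i3: "integrable Q (\<lambda>x. p x * ln (p x))" using ent intN[OF lnpm] by (simp add: entd[abs_def])
  have KL: "KL_divergence (exp 1) Q N = (\<integral>x. p x * ln (p x) \<partial>Q)"
    unfolding KL_divergence_def entd[abs_def] using intgN[OF lnpm] by simp
  have P1: "(\<integral>x. p x * 1 \<partial>Q) = 1" using intgN[of "\<lambda>_. 1"] N.prob_space by simp
  define Z where "Z = (\<integral>x. exp (f x) \<partial>Q)"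
  have Z0: "0 \<le> Z" unfolding Z_def by (simp add: integral_nonneg_AE)
  have "Z \<noteq> 0"
  proof
    assume "Z = 0"
    then have "AE x in Q. exp (f x) = 0" unfolding Z_def using integral_nonneg_eq_0_iff_AE[OF ef] by simp
    then have "AE x in Q. False" by simp
    then show False by (simp add: Q.emeasure_space_1)
  qed
  with Z0 have Zp: "0 < Z" by simp
  define c where "c = ln Z"
  have pt: "p x * (f x - c) \<le> p x * ln (p x) - p x * 1 + exp (f x) / Z" for x
  proof -
    have "p x * (f x - c) \<le> p x * ln (p x) - p x + exp (f x - c)" by (rule young_pt[OF p0])
    also have "exp (f x - c) = exp (f x) / Z" using Zp by (simp add: c_def exp_diff)
    finally show ?thesis by simp
  qed
  have "(\<integral>x. p x * (f x - c) \<partial>Q) \<le> (\<integral>x. p x * ln (p x) - p x * 1 + exp (f x) / Z \<partial>Q)"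
    apply (rule integral_mono)
    using i1 i2 i3 ef pt by (auto simp: right_diff_distrib)
  also have "\<dots> = KL_divergence (exp 1) Q N - 1 + 1"
    using i1 i2 i3 ef Zp P1 by (simp add: KL Z_def[symmetric])
  finally have "(\<integral>x. p x * (f x - c) \<partial>Q) \<le> KL_divergence (exp 1) Q N" by simp
  moreover have "(\<integral>x. p x * (f x - c) \<partial>Q) = integral\<^sup>L N f - c"
    using i1 i2 P1 intgN[OF f] by (simp add: right_diff_distrib)
  ultimately show ?thesis by (simp add: c_def Z_def)
qed

lemma dv_int:
  assumes Q: "prob_space Q" and N: "prob_space N" and sN: "sets N = sets Q"
  and ac: "absolutely_continuous Q N"
  and ent: "integrable N (entropy_density (exp 1) Q N)"
  and g[measurable]: "(g :: _ \<Rightarrow> real) \<in> borel_measurable Q" and g0: "\<And>x. x \<in> space Q \<Longrightarrow> 0 \<le> g x"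
  and t: "0 < t" and ef: "integrable Q (\<lambda>x. exp (t * g x))"
  shows "integrable N g"
proof -
  interpret Q: prob_space Q by fact
  interpret N: prob_space N by fact
  define p where "p x = enn2real (RN_deriv Q N x)" for x
  have pm[measurable]: "p \<in> borel_measurable Q" unfolding p_def by measurable
  have p0: "0 \<le> p x" for x unfolding p_def by simp
  have "N = density Q (RN_deriv Q N)" using Q.density_RN_deriv[OF ac sN] by simp
  also have "\<dots> = density Q (\<lambda>x. ennreal (p x))"
  proof (rule density_cong)
    show "AE x in Q. RN_deriv Q N x = ennreal (p x)"
      using Q.RN_deriv_finite[OF prob_space_imp_sigma_finite[OF N] ac sN]
      by eventually_elim (simp add: p_def less_top)
  qed auto
  finally have Neq: "N = density Q (\<lambda>x. ennreal (p x))" .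
  have intN: "integrable N h \<longleftrightarrow> integrable Q (\<lambda>x. p x * h x)" if [measurable]: "h \<in> borel_measurable Q" for h :: "_ \<Rightarrow> real"
    unfolding Neq by (subst integrable_density) (auto simp: p0)
  have entd: "entropy_density (exp 1) Q N x = ln (p x)" for x
    by (simp add: entropy_density_def p_def log_def)
  have lnpm[measurable]: "(\<lambda>x. ln (p x)) \<in> borel_measurable Q" by measurable
  have i2: "integrable Q (\<lambda>x. p x * 1)" using intN[of "\<lambda>_. 1"] N.integrable_const by simp
  have i3: "integrable Q (\<lambda>x. p x * ln (p x))" using ent intN[OF lnpm] by (simp add: entd[abs_def])
  have iB: "integrable Q (\<lambda>x. (p x * ln (p x) - p x * 1 + exp (t * g x)) / t)"
    using i2 i3 ef by auto
  have "integrable Q (\<lambda>x. p x * g x)"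
  proof (rule Bochner_Integration.integrable_bound[OF iB])
    show "AE x in Q. norm (p x * g x) \<le> norm ((p x * ln (p x) - p x * 1 + exp (t * g x)) / t)"
    proof (rule AE_I2)
      fix x assume x: "x \<in> space Q"
      have a: "p x * (t * g x) \<le> p x * ln (p x) - p x + exp (t * g x)" by (rule young_pt[OF p0])
      have b: "0 \<le> p x * g x" using p0 g0[OF x] by simp
      from a have "p x * g x \<le> (p x * ln (p x) - p x * 1 + exp (t * g x)) / t"
        using t by (simp add: pos_le_divide_eq algebra_simps)
      with b t show "norm (p x * g x) \<le> norm ((p x * ln (p x) - p x * 1 + exp (t * g x)) / t)"
        by (smt (verit) divide_right_mono abs_ge_self real_norm_def)
    qed
  qed measurable
  then show ?thesis using intN[OF g] by simp
qed

lemma dual_inv_ge: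
  fixes \<psi> :: "real \<Rightarrow> real" and b :: ereal
  assumes b: "0 < b" and h: "\<And>t. t \<in> dom0 b \<Longrightarrow> t * d \<le> I + \<psi> t" and psi0: "\<psi> 0 = 0"
  shows "d \<le> legendre_dual_inv \<psi> b I"
proof -
  have d0: "0 \<in> dom0 b" using b by (simp add: dom0_def zero_ereal_def)
  have I0: "0 \<le> I" using h[OF d0] psi0 by simp
  obtain t0 where t0: "0 < ereal t0" "ereal t0 < b" using ereal_dense2[OF b] by auto
  then have t0d: "t0 \<in> dom0 b" and t0p: "0 < t0" by (auto simp: dom0_def)
  define x0 where "x0 = (I + 1 + \<bar>\<psi> t0\<bar>) / t0"
  have "ereal I < ereal (t0 * x0 - \<psi> t0)" using t0p by (simp add: x0_def)
  also have "\<dots> \<le> legendre_dual \<psi> b x0" unfolding legendre_dual_def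
    by (rule SUP_upper[OF t0d])
  finally have x0in: "x0 \<in> {x. 0 \<le> x \<and> ereal I < legendre_dual \<psi> b x}"
    using t0p I0 by (simp add: x0_def)
  show ?thesis unfolding legendre_dual_inv_def
  proof (rule cInf_greatest)
    show "{x. 0 \<le> x \<and> ereal I < legendre_dual \<psi> b x} \<noteq> {}" using x0in by blast
  next
    fix x assume "x \<in> {x. 0 \<le> x \<and> ereal I < legendre_dual \<psi> b x}"
    then have "ereal I < (SUP t\<in>dom0 b. ereal (t * x - \<psi> t))" by (simp add: legendre_dual_def)
    then obtain t where t: "t \<in> dom0 b" "I < t * x - \<psi> t" by (auto simp: less_SUP_iff)
    show "d \<le> x"
    proof (cases "t = 0")
      case True then show ?thesis using t psi0 I0 by simp
    next
      case False
      then have tp: "0 < t" using t(1) by (simp add: dom0_def)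
      have "t * d < t * x" using h[OF t(1)] t(2) by simp
      then show ?thesis using tp by simp
    qed
  qed
qed

theorem theorem1:
  fixes n :: nat
    and \<pi> :: "'s measure"
    and MW :: "'w measure"
    and K :: "(nat \<Rightarrow> 's) \<Rightarrow> 'w measure"
    and loss :: "'s \<Rightarrow> 'w \<Rightarrow> real"
    and \<psi>p \<psi>m :: "real \<Rightarrow> real"
    and bp bm :: ereal
  defines "J \<equiv> joint_law n \<pi> MW K"
    and "PP \<equiv> \<pi> \<Otimes>\<^sub>M output_law n \<pi> MW K"
    and "m \<equiv> (\<integral>z. loss (fst z) (snd z) \<partial>(\<pi> \<Otimes>\<^sub>M output_law n \<pi> MW K))"
  assumes n: "1 \<le> n"
    and pi: "prob_space \<pi>"
    and K: "K \<in> measurable (sample_space n \<pi>) (prob_algebra MW)"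
    and loss_meas: "(\<lambda>z. loss (fst z) (snd z)) \<in> borel_measurable (\<pi> \<Otimes>\<^sub>M MW)"
    and loss_nonneg: "\<And>x w. x \<in> space \<pi> \<Longrightarrow> w \<in> space MW \<Longrightarrow> 0 \<le> loss x w"
    \<comment> \<open>finiteness of the mutual informations I(S_i;W)\<close>
    and mi_ac: "\<And>i. i < n \<Longrightarrow> absolutely_continuous
                 (distr J \<pi> (\<lambda>z. fst z i) \<Otimes>\<^sub>M distr J MW snd)
                 (distr J (\<pi> \<Otimes>\<^sub>M MW) (\<lambda>z. (fst z i, snd z)))"
    and mi_int: "\<And>i. i < n \<Longrightarrow> integrable (distr J (\<pi> \<Otimes>\<^sub>M MW) (\<lambda>z. (fst z i, snd z)))
                 (entropy_density (exp 1) (distr J \<pi> (\<lambda>z. fst z i) \<Otimes>\<^sub>M distr J MW snd)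
                    (distr J (\<pi> \<Otimes>\<^sub>M MW) (\<lambda>z. (fst z i, snd z))))"
    \<comment> \<open>the cumulant generating function Lambda of ell(S',W') is well defined\<close>
    and loss_int: "integrable PP (\<lambda>z. loss (fst z) (snd z))"
    \<comment> \<open>upper-tail condition with psi_+\<close>
    and bp: "0 < bp"
    and psip_convex: "convex_on (dom0 bp) \<psi>p"
    and psip0: "\<psi>p 0 = 0"
    and psip_deriv: "(\<psi>p has_real_derivative 0) (at 0 within dom0 bp)"
    and cgf_p: "\<And>t. t \<in> dom0 bp \<Longrightarrow>
        integrable PP (\<lambda>z. exp (t * (loss (fst z) (snd z) - m))) \<and>
        ln (\<integral>z. exp (t * (loss (fst z) (snd z) - m)) \<partial>PP) \<le> \<psi>p t"
    \<comment> \<open>lower-tail condition with psi_-\<close>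
    and bm: "0 < bm"
    and psim_convex: "convex_on (dom0 bm) \<psi>m"
    and psim0: "\<psi>m 0 = 0"
    and psim_deriv: "(\<psi>m has_real_derivative 0) (at 0 within dom0 bm)"
    and cgf_m: "\<And>t. - t \<in> dom0 bm \<Longrightarrow>
        integrable PP (\<lambda>z. exp (t * (loss (fst z) (snd z) - m))) \<and>
        ln (\<integral>z. exp (t * (loss (fst z) (snd z) - m)) \<partial>PP) \<le> \<psi>m (- t)"
  shows "- (1 / real n) * (\<Sum>i<n. legendre_dual_inv \<psi>p bp (mi_SiW n \<pi> MW K i))
           \<le> gen_err n \<pi> MW K loss
         \<and> gen_err n \<pi> MW K loss
           \<le> (1 / real n) * (\<Sum>i<n. legendre_dual_inv \<psi>m bm (mi_SiW n \<pi> MW K i))"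
proof -
  interpret pi: prob_space \<pi> by fact
  define S where "S = sample_space n \<pi>"
  have PS: "prob_space S" unfolding S_def sample_space_def by (rule prob_space_PiM) (rule pi)
  have Sne: "space S \<noteq> {}" using prob_space.not_empty[OF PS] .
  have Km: "K \<in> S \<rightarrow>\<^sub>M subprob_algebra MW" using K unfolding S_def by (rule measurable_prob_algebraD)
  have Ks: "prob_space (K s)" "sets (K s) = sets MW" if "s \<in> space S" for s
    using measurable_space[OF K that[unfolded S_def]] by (auto simp: space_prob_algebra)
  define NK where "NK s = distr (K s) (S \<Otimes>\<^sub>M MW) (\<lambda>w. (s, w))" for s
  have NKm: "NK \<in> S \<rightarrow>\<^sub>M subprob_algebra (S \<Otimes>\<^sub>M MW)"
    unfolding NK_def by (rule measurable_distr2[OF _ Km]) simp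
  have Jeq: "J = S \<bind> NK" unfolding J_def joint_law_def S_def NK_def ..
  have sJ: "sets J = sets (S \<Otimes>\<^sub>M MW)" unfolding Jeq
    by (rule sets_bind[OF _ Sne]) (simp add: NK_def)
  have PJ: "prob_space J" unfolding Jeq
  proof (rule prob_space.prob_space_bind[OF PS _ NKm])
    show "AE x in S. prob_space (NK x)"
      by (rule AE_I2) (auto simp: NK_def measurable_cong_sets[OF Ks(2) refl] intro!: prob_space.prob_space_distr Ks measurable_Pair2')
  qed
  interpret J: prob_space J by fact
  have mJ: "measurable J L = measurable (S \<Otimes>\<^sub>M MW) L" for L by (rule measurable_cong_sets[OF sJ refl])
  have comp_m[measurable]: "(\<lambda>z. fst z i) \<in> (S \<Otimes>\<^sub>M MW) \<rightarrow>\<^sub>M \<pi>" if "i < n" for i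
  proof -
    have [measurable]: "i \<in> {..<n}" using that by simp
    show ?thesis unfolding S_def sample_space_def by measurable
  qed
  have marg: "distr J \<pi> (\<lambda>z. fst z i) = \<pi>" if i: "i < n" for i
  proof -
    have "distr J \<pi> (\<lambda>z. fst z i) = S \<bind> (\<lambda>s. distr (NK s) \<pi> (\<lambda>z. fst z i))"
      unfolding Jeq by (rule distr_bind[OF NKm Sne comp_m[OF i]])
    also have "\<dots> = S \<bind> (\<lambda>s. return \<pi> (s i))"
    proof (rule bind_cong[OF refl])
      fix s assume s: "s \<in> space S"
      interpret Kp: prob_space "K s" using Ks[OF s] by simp
      have "distr (NK s) \<pi> (\<lambda>z. fst z i) = distr (K s) \<pi> (\<lambda>w. s i)"
        unfolding NK_def
        by (subst distr_distr) (auto simp: comp_def measurable_cong_sets[OF Ks(2)[OF s] refl] s intro!: measurable_Pair2' comp_m[OF i])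
      also have "\<dots> = return \<pi> (s i)"
        using s i by (intro Kp.distr_const) (auto simp: S_def sample_space_def space_PiM)
      finally show "distr (NK s) \<pi> (\<lambda>z. fst z i) = return \<pi> (s i)" .
    qed
    also have "\<dots> = distr S \<pi> (\<lambda>s. s i)"
      by (rule bind_return_distr'[OF Sne]) (use i in \<open>simp add: S_def sample_space_def\<close>)
    also have "\<dots> = \<pi>" unfolding S_def sample_space_def
      by (rule distr_PiM_component) (use i pi in auto)
    finally show ?thesis .
  qed
  define PW where "PW = output_law n \<pi> MW K"
  have PWeq: "distr J MW snd = PW" unfolding PW_def output_law_def J_def ..
  have snd_m: "snd \<in> J \<rightarrow>\<^sub>M MW" unfolding mJ by simp
  have PPW: "prob_space PW" unfolding PWeq[symmetric] by (rule J.prob_space_distr[OF snd_m])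
  interpret PW: prob_space PW by fact
  have sPW: "sets PW = sets MW" unfolding PWeq[symmetric] by simp
  have PPP: "prob_space PP" unfolding PP_def PW_def[symmetric] by (rule prob_space_pair[OF pi PPW])
  interpret PP: prob_space PP by fact
  interpret pair_sigma_finite \<pi> PW by unfold_locales
  have sPP: "sets PP = sets (\<pi> \<Otimes>\<^sub>M MW)" unfolding PP_def PW_def[symmetric]
    by (rule sets_pair_measure_cong[OF refl sPW])
  have spPP: "space PP = space \<pi> \<times> space MW"
    using sets_eq_imp_space_eq[OF sPP] by (simp add: space_pair_measure)
  define g where "g z = loss (fst z) (snd z)" for z
  have gm[measurable]: "g \<in> borel_measurable PP" unfolding measurable_cong_sets[OF sPP refl] g_def
    by (rule loss_meas)
  have gm2[measurable]: "g \<in> borel_measurable (\<pi> \<Otimes>\<^sub>M MW)" unfolding g_def by (rule loss_meas)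
  have g0: "0 \<le> g z" if "z \<in> space PP" for z using that loss_nonneg by (auto simp: spPP g_def)
  have mdef: "m = integral\<^sup>L PP g" unfolding m_def PP_def g_def ..
  define Pi where "Pi i = distr J (\<pi> \<Otimes>\<^sub>M MW) (\<lambda>z. (fst z i, snd z))" for i
  have pair_m: "(\<lambda>z. (fst z i, snd z)) \<in> J \<rightarrow>\<^sub>M \<pi> \<Otimes>\<^sub>M MW" if "i < n" for i
    unfolding mJ using comp_m[OF that] by measurable
  have PPi: "prob_space (Pi i)" if "i < n" for i unfolding Pi_def by (rule J.prob_space_distr[OF pair_m[OF that]])
  have sPi: "sets (Pi i) = sets PP" for i unfolding Pi_def sPP by simp
  have Qeq: "distr J \<pi> (\<lambda>z. fst z i) \<Otimes>\<^sub>M distr J MW snd = PP" if "i < n" for i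
    unfolding marg[OF that] PWeq PP_def PW_def ..
  have ac: "absolutely_continuous PP (Pi i)" if "i < n" for i
    using mi_ac[OF that] unfolding Qeq[OF that] Pi_def J_def[symmetric] .
  have ent: "integrable (Pi i) (entropy_density (exp 1) PP (Pi i))" if "i < n" for i
    using mi_int[OF that] unfolding Qeq[OF that] Pi_def J_def[symmetric] .
  have MI: "mi_SiW n \<pi> MW K i = KL_divergence (exp 1) PP (Pi i)" if "i < n" for i
    unfolding mi_SiW_def J_def[symmetric] prob_space.mutual_information_def[OF PJ] Qeq[OF that] Pi_def ..
  obtain t0 where t0: "0 < ereal t0" "ereal t0 < bp" using ereal_dense2[OF bp] by auto
  then have t0d: "t0 \<in> dom0 bp" and t0p: "0 < t0" by (auto simp: dom0_def)
  have "integrable PP (\<lambda>z. exp (t0 * (g z - m)) * exp (t0 * m))"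
    using cgf_p[OF t0d] by (simp add: g_def)
  then have et0: "integrable PP (\<lambda>z. exp (t0 * g z))"
    by (simp add: right_diff_distrib exp_diff)
  have intg: "integrable (Pi i) g" if "i < n" for i
    by (rule dv_int[OF PPP PPi[OF that] sPi ac[OF that] ent[OF that] gm g0 t0p et0])
  define E where "E i = integral\<^sup>L (Pi i) g" for i
  have key: "t * (E i - m) \<le> mi_SiW n \<pi> MW K i + ln (\<integral>z. exp (t * (g z - m)) \<partial>PP)"
    if i: "i < n" and ti: "integrable PP (\<lambda>z. exp (t * (g z - m)))" for i t
  proof -
    interpret Pi: prob_space "Pi i" by (rule PPi[OF i])
    have "integral\<^sup>L (Pi i) (\<lambda>z. t * (g z - m)) \<le> KL_divergence (exp 1) PP (Pi i) + ln (\<integral>z. exp (t * (g z - m)) \<partial>PP)"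
      by (rule dv[OF PPP PPi[OF i] sPi ac[OF i] ent[OF i]]) (use intg[OF i] ti in auto)
    moreover have "integral\<^sup>L (Pi i) (\<lambda>z. t * (g z - m)) = t * (E i - m)"
      using intg[OF i] by (simp add: E_def Pi.prob_space)
    ultimately show ?thesis using MI[OF i] by (metis (no_types, lifting))
  qed
  have upA: "E i - m \<le> legendre_dual_inv \<psi>p bp (mi_SiW n \<pi> MW K i)" if i: "i < n" for i
  proof (rule dual_inv_ge[where b=bp and \<psi>=\<psi>p, OF bp _ psip0])
    fix t assume t: "t \<in> dom0 bp"
    have "integrable PP (\<lambda>z. exp (t * (g z - m)))" using cgf_p[OF t] by (simp add: g_def)
    from key[OF i this] cgf_p[OF t]
    show "t * (E i - m) \<le> mi_SiW n \<pi> MW K i + \<psi>p t" by (simp add: g_def)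
  qed
  have upB: "m - E i \<le> legendre_dual_inv \<psi>m bm (mi_SiW n \<pi> MW K i)" if i: "i < n" for i
  proof (rule dual_inv_ge[where b=bm and \<psi>=\<psi>m, OF bm _ psim0])
    fix s assume s: "s \<in> dom0 bm"
    then have s': "- (- s) \<in> dom0 bm" by simp
    have "integrable PP (\<lambda>z. exp ((- s) * (g z - m)))" using cgf_m[OF s'] by (simp add: g_def)
    from key[OF i this] cgf_m[OF s']
    show "s * (m - E i) \<le> mi_SiW n \<pi> MW K i + \<psi>m s" by (simp add: g_def algebra_simps)
  qed
  define TR where "TR w = true_risk \<pi> loss w" for w
  have lint: "integrable (\<pi> \<Otimes>\<^sub>M PW) (\<lambda>(x, w). loss x w)"
    using loss_int unfolding PP_def PW_def[symmetric] by (simp add: split_beta')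
  have TRint: "integrable PW TR" unfolding TR_def true_risk_def by (rule integrable_snd[OF lint])
  have TRval: "integral\<^sup>L PW TR = m" unfolding TR_def true_risk_def
    using integral_snd[OF lint] by (simp add: m_def PW_def split_beta')
  have TRm: "TR \<in> borel_measurable MW"
    using borel_measurable_integrable[OF TRint] measurable_cong_sets[OF sPW refl, of borel] by metis
  have TRJ: "integrable J (\<lambda>z. TR (snd z))" and TRJv: "(\<integral>z. TR (snd z) \<partial>J) = m"
    using TRint TRval integrable_distr_eq[OF snd_m TRm] integral_distr[OF snd_m TRm] by (simp_all add: PWeq)
  have LJ: "integrable J (\<lambda>z. loss (fst z i) (snd z))" and LJv: "(\<integral>z. loss (fst z i) (snd z) \<partial>J) = E i"
    if i: "i < n" for i
    using intg[OF i] integrable_distr_eq[OF pair_m[OF i] gm2] integral_distr[OF pair_m[OF i] gm2]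
    by (simp_all add: E_def Pi_def g_def)
  have gen: "gen_err n \<pi> MW K loss = m - (1 / real n) * (\<Sum>i<n. E i)"
  proof -
    have "gen_err n \<pi> MW K loss = (\<integral>z. TR (snd z) - (1 / real n) * (\<Sum>i<n. loss (fst z i) (snd z)) \<partial>J)"
      unfolding gen_err_def J_def[symmetric] TR_def emp_risk_def ..
    also have "\<dots> = (\<integral>z. TR (snd z) \<partial>J) - (1 / real n) * (\<Sum>i<n. (\<integral>z. loss (fst z i) (snd z) \<partial>J))"
    proof -
      have si: "integrable J (\<lambda>z. \<Sum>i<n. loss (fst z i) (snd z))"
        using LJ by (intro Bochner_Integration.integrable_sum) auto
      have "(\<integral>z. TR (snd z) - (1 / real n) * (\<Sum>i<n. loss (fst z i) (snd z)) \<partial>J)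
          = (\<integral>z. TR (snd z) \<partial>J) - (\<integral>z. (1 / real n) * (\<Sum>i<n. loss (fst z i) (snd z)) \<partial>J)"
        using TRJ si by (intro Bochner_Integration.integral_diff) auto
      also have "(\<integral>z. (1 / real n) * (\<Sum>i<n. loss (fst z i) (snd z)) \<partial>J) = (1 / real n) * (\<integral>z. (\<Sum>i<n. loss (fst z i) (snd z)) \<partial>J)"
        by (rule integral_mult_right_zero)
      also have "(\<integral>z. (\<Sum>i<n. loss (fst z i) (snd z)) \<partial>J) = (\<Sum>i<n. (\<integral>z. loss (fst z i) (snd z) \<partial>J))"
        using LJ by (intro Bochner_Integration.integral_sum) auto
      finally show ?thesis .
    qed
    also have "\<dots> = m - (1 / real n) * (\<Sum>i<n. E i)"
      using TRJv LJv by simp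
    finally show ?thesis .
  qed
  have nr: "0 < real n" using n by simp
  have s1: "(\<Sum>i<n. E i) \<le> (\<Sum>i<n. legendre_dual_inv \<psi>p bp (mi_SiW n \<pi> MW K i)) + real n * m"
  proof -
    have "(\<Sum>i<n. E i) \<le> (\<Sum>i<n. legendre_dual_inv \<psi>p bp (mi_SiW n \<pi> MW K i) + m)"
      by (rule sum_mono) (use upA in force)
    then show ?thesis by (simp add: sum.distrib)
  qed
  have s2: "real n * m \<le> (\<Sum>i<n. legendre_dual_inv \<psi>m bm (mi_SiW n \<pi> MW K i)) + (\<Sum>i<n. E i)"
  proof -
    have "(\<Sum>i<n. m) \<le> (\<Sum>i<n. legendre_dual_inv \<psi>m bm (mi_SiW n \<pi> MW K i) + E i)"
      by (rule sum_mono) (use upB in force)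
    then show ?thesis by (simp add: sum.distrib)
  qed
  show ?thesis unfolding gen
  proof
    show "- (1 / real n) * (\<Sum>i<n. legendre_dual_inv \<psi>p bp (mi_SiW n \<pi> MW K i)) \<le> m - 1 / real n * (\<Sum>i<n. E i)"
      using s1 nr by (simp add: field_simps)
    show "m - 1 / real n * (\<Sum>i<n. E i) \<le> 1 / real n * (\<Sum>i<n. legendre_dual_inv \<psi>m bm (mi_SiW n \<pi> MW K i))"
    proof -
      have "m = real n * m / real n" using nr by simp
      also have "\<dots> \<le> ((\<Sum>i<n. legendre_dual_inv \<psi>m bm (mi_SiW n \<pi> MW K i)) + (\<Sum>i<n. E i)) / real n"
        by (rule divide_right_mono[OF s2]) (use nr in simp)
      finally show ?thesis by (simp add: add_divide_distrib)
    qed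
  qed
qed

end
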